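(* Under the same setting as the fixed-time observer but with $c_3=0$, i.e. with the observer $$\dot\eta_i=S\eta_i-c_1y_i-c_2\,\mathrm{sig}^a(y_i),\qquad y_i=\sum_{j=0}^Na_{ij}(\eta_i-\eta_j),\quad i=1,\dots,N,$$ and leader $\dot\eta_0=S\eta_0$, suppose $\mathcal G$ contains a spanning tree rooted at node $0$, $0<a<1$, $c_1>\|D\otimes S\|$ and $c_2>0$, where $D$ is a positive definite diagonal matrix with $H^TD+DH\ge 2I_N$. Then there exists a settling-time function $T_1(\eta(0))\ge0$ such that for every $\eta(0)\in\mathbb{R}^{(N+1)n}$, $\lim_{t\to T_1}(\eta_i(t)-\eta_0(t))=0$ and $\eta_i(t)-\eta_0(t)=0$ for all $t\ge T_1(\eta(0))$, $i=1,\dots,N$.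
   Context: Nodes $0,1,\dots,N$ form a digraph $\mathcal G$ with node $0$ the leader; weights $a_{ii}=0$, $a_{ij}>0$ if there is an edge from $j$ to $i$, $a_{ij}=0$ otherwise. $H=[h_{ij}]_{i,j=1}^N$ with $h_{ii}=\sum_{j=0}^Na_{ij}$, $h_{ij}=-a_{ij}$ ($i\neq j$). For $x\in\mathbb{R}^n$ and $a>0$, $\mathrm{sig}^a(x)=[\mathrm{sign}(x_1)|x_1|^a,\dots,\mathrm{sign}(x_n)|x_n|^a]^T$. $\|\cdot\|$ denotes the spectral norm, $\otimes$ the Kronecker product. *)

theory Defs
  imports "HOL-Analysis.Analysis"
begin

text \<open>Nodes: the leader 0 and the followers, indexed by a finite type 'f (so N = CARD('f)).
  Weights among followers: a i j (edge from j to i); weights from the leader: b i = a_{i0}.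
  State dimension n = CARD('n).\<close>

definition sig :: "real \<Rightarrow> real^'n \<Rightarrow> real^'n" where
  "sig e x = (\<chi> k. sgn (x$k) * \<bar>x$k\<bar> powr e)"

definition kron :: "real^'f^'f \<Rightarrow> real^'n^'n \<Rightarrow> real^('f \<times> 'n)^('f \<times> 'n)" where
  "kron A B = (\<chi> p q. A$(fst p)$(fst q) * B$(snd p)$(snd q))"

definition Hmat :: "('f::finite \<Rightarrow> 'f \<Rightarrow> real) \<Rightarrow> ('f \<Rightarrow> real) \<Rightarrow> real^'f^'f" where
  "Hmat a b = (\<chi> i j. if i = j then b i + (\<Sum>k\<in>UNIV. a i k) else - a i j)"

inductive reach_from_leader :: "('f \<Rightarrow> 'f \<Rightarrow> real) \<Rightarrow> ('f \<Rightarrow> real) \<Rightarrow> 'f \<Rightarrow> bool"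
  for a b where
  leader_edge: "b i > 0 \<Longrightarrow> reach_from_leader a b i"
| follower_edge: "reach_from_leader a b j \<Longrightarrow> a i j > 0 \<Longrightarrow> reach_from_leader a b i"

definition has_spanning_tree_from_leader :: "('f \<Rightarrow> 'f \<Rightarrow> real) \<Rightarrow> ('f \<Rightarrow> real) \<Rightarrow> bool" where
  "has_spanning_tree_from_leader a b \<longleftrightarrow> (\<forall>i. reach_from_leader a b i)"

definition yout :: "('f::finite \<Rightarrow> 'f \<Rightarrow> real) \<Rightarrow> ('f \<Rightarrow> real) \<Rightarrow> real^'n \<Rightarrow> ('f \<Rightarrow> real^'n) \<Rightarrow> 'f \<Rightarrow> real^'n" where
  "yout a b x0 x i = b i *\<^sub>R (x i - x0) + (\<Sum>j\<in>UNIV. a i j *\<^sub>R (x i - x j))"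

definition observer_solution ::
  "('f::finite \<Rightarrow> 'f \<Rightarrow> real) \<Rightarrow> ('f \<Rightarrow> real) \<Rightarrow> real^'n^'n \<Rightarrow> real \<Rightarrow> real \<Rightarrow> real \<Rightarrow>
   (real \<Rightarrow> real^'n) \<Rightarrow> ('f \<Rightarrow> real \<Rightarrow> real^'n) \<Rightarrow> bool" where
  "observer_solution a b S c1 c2 e eta0 eta \<longleftrightarrow>
     (\<forall>t\<ge>0. (eta0 has_vector_derivative (S *v eta0 t)) (at t within {0..})) \<and>
     (\<forall>i. \<forall>t\<ge>0. (eta i has_vector_derivative
         (S *v eta i t - c1 *\<^sub>R yout a b (eta0 t) (\<lambda>j. eta j t) i
                       - c2 *\<^sub>R sig e (yout a b (eta0 t) (\<lambda>j. eta j t) i))) (at t within {0..}))"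

end

theory Submission
  imports Defs
begin


lemma abs_powr_deriv:
  fixes a x :: real assumes a: "0 < a"
  shows "((\<lambda>y. \<bar>y\<bar> powr (1+a)) has_real_derivative (1+a) * (sgn x * \<bar>x\<bar> powr a)) (at x)"
proof (cases "x = 0")
  case True
  have lim: "((\<lambda>h. \<bar>h\<bar> powr a) \<longlongrightarrow> 0) (at (0::real))"
  proof -
    have "continuous (at (0::real)) (\<lambda>h. \<bar>h\<bar> powr a)"
      using a by (intro continuous_intros) auto
    then have "((\<lambda>h. \<bar>h\<bar> powr a) \<longlongrightarrow> \<bar>0::real\<bar> powr a) (at 0)"
      by (simp add: continuous_within isCont_def)
    then show ?thesis by simp
  qed
  have "((\<lambda>h. (\<bar>0 + h\<bar> powr (1+a) - \<bar>0::real\<bar> powr (1+a)) / h) \<longlongrightarrow> 0) (at 0)"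
  proof (rule tendsto_norm_zero_cancel)
    have "((\<lambda>h. norm ((\<bar>0 + h\<bar> powr (1+a) - \<bar>0::real\<bar> powr (1+a)) / h)) \<longlongrightarrow> 0) (at 0) \<longleftrightarrow>
          ((\<lambda>h. \<bar>h\<bar> powr a) \<longlongrightarrow> 0) (at (0::real))"
    proof (rule tendsto_cong)
      show "\<forall>\<^sub>F h in at 0. norm ((\<bar>0 + h\<bar> powr (1+a) - \<bar>0::real\<bar> powr (1+a)) / h) = \<bar>h\<bar> powr a"
        unfolding eventually_at_filter
        by (auto simp: powr_add abs_divide)
    qed
    then show "((\<lambda>h. norm ((\<bar>0 + h\<bar> powr (1+a) - \<bar>0::real\<bar> powr (1+a)) / h)) \<longlongrightarrow> 0) (at 0)"
      using lim by simp
  qed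
  then show ?thesis using True by (simp add: DERIV_def)
next
  case False
  show ?thesis
  proof (cases "x > 0")
    case True
    have d: "((\<lambda>y. y powr (1+a)) has_real_derivative (1+a) * x powr a) (at x)"
      using has_real_derivative_powr[OF True, of "1+a"] by simp
    show ?thesis
      by (rule has_field_derivative_transform_within_open[OF _ open_greaterThan[of 0]])
         (use d True in auto)
  next
    case neg: False
    with False have xn: "x < 0" by simp
    have d0: "((\<lambda>y. - y) has_real_derivative -1) (at x)"
      by (auto intro!: derivative_eq_intros)
    have d: "((\<lambda>y. (- y) powr (1+a)) has_real_derivative (1+a) * (- x) powr (1+a - of_nat 1) * (-1)) (at x)"
      by (rule DERIV_fun_powr[OF d0]) (use xn in simp)
    show ?thesis
      by (rule has_field_derivative_transform_within_open[OF _ open_lessThan[of 0]])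
         (use d xn in auto)
  qed
qed

lemma decr_interval:
  fixes f f' :: "real \<Rightarrow> real" and s t :: real
  assumes st: "s \<le> t" and cont: "continuous_on {s..t} f"
    and der: "\<And>x. s < x \<Longrightarrow> x < t \<Longrightarrow> (f has_real_derivative f' x) (at x)"
    and neg: "\<And>x. s < x \<Longrightarrow> x < t \<Longrightarrow> f' x \<le> 0"
  shows "f t \<le> f s"
proof (cases "s = t")
  case True then show ?thesis by simp
next
  case False
  with st have lt: "s < t" by simp
  have "\<And>x. s < x \<Longrightarrow> x < t \<Longrightarrow> f differentiable (at x)"
    using der real_differentiable_def by blast
  from MVT[OF lt cont this] obtain l z where z: "s < z" "z < t" "DERIV f z :> l" "f t - f s = (t - s) * l"
    by blast
  have "l = f' z" using DERIV_unique[OF z(3) der[OF z(1,2)]] .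
  with neg[OF z(1,2)] have "l \<le> 0" by simp
  with z(4) lt have "f t - f s \<le> 0" by (simp add: mult_nonneg_nonpos)
  then show ?thesis by simp
qed

lemma finite_time:
  fixes V V' :: "real \<Rightarrow> real" and \<kappa> q :: real
  assumes der: "\<And>t. t \<ge> 0 \<Longrightarrow> (V has_real_derivative V' t) (at t within {0..})"
    and nonneg: "\<And>t. t \<ge> 0 \<Longrightarrow> V t \<ge> 0"
    and neg: "\<And>t. t \<ge> 0 \<Longrightarrow> V' t \<le> 0"
    and rate: "\<And>t. t \<ge> 0 \<Longrightarrow> V t \<le> V 0 \<Longrightarrow> V' t \<le> - \<kappa> * V t powr (1 - q)"
    and k: "\<kappa> > 0" and q: "0 < q" "q < 1"
    and tT: "t \<ge> V 0 powr q / (q * \<kappa>)"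
  shows "V t = 0"
proof -
  have atint: "\<And>x::real. x > 0 \<Longrightarrow> at x within {0..} = at x"
    by (rule at_within_interior) simp
  have derat: "\<And>x. x > 0 \<Longrightarrow> (V has_real_derivative V' x) (at x)"
    using der atint by (metis less_imp_le)
  have cont: "continuous_on {0..} V"
    unfolding continuous_on_eq_continuous_within
  proof
    fix x :: real assume "x \<in> {0..}"
    then show "continuous (at x within {0..}) V" using DERIV_continuous[OF der[of x]] by simp
  qed
  have mono: "\<And>s t. 0 \<le> s \<Longrightarrow> s \<le> t \<Longrightarrow> V t \<le> V s"
  proof -
    fix s t :: real assume "0 \<le> s" "s \<le> t"
    show "V t \<le> V s"
      by (rule decr_interval[of s t V V'])
         (use \<open>0 \<le> s\<close> \<open>s \<le> t\<close> in \<open>auto intro: continuous_on_subset[OF cont] derat neg\<close>)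
  qed
  define T where "T = V 0 powr q / (q * \<kappa>)"
  have T0: "T \<ge> 0" unfolding T_def using k q by simp
  have VT: "V T = 0"
  proof (rule ccontr)
    assume "V T \<noteq> 0"
    with nonneg[OF T0] have VTp: "V T > 0" by simp
    have pos: "\<And>x. 0 \<le> x \<Longrightarrow> x \<le> T \<Longrightarrow> V x > 0"
      using mono VTp by (meson less_le_trans)
    define W where "W x = V x powr q + q * \<kappa> * x" for x
    have contW: "continuous_on {0..T} W"
      unfolding W_def
      by (intro continuous_intros continuous_on_subset[OF cont]) (use pos in \<open>force simp: less_imp_le\<close>)+
    have derW: "(W has_real_derivative (q * V x powr (q - 1) * V' x + q * \<kappa>)) (at x)"
      if "0 < x" "x < T" for x
    proof -
      have "((\<lambda>v. v powr q) has_real_derivative q * V x powr (q - 1)) (at (V x))"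
        by (rule has_real_derivative_powr) (use pos that in auto)
      from DERIV_chain'[OF derat[OF \<open>0 < x\<close>] this]
      have "((\<lambda>x. V x powr q) has_real_derivative q * V x powr (q - 1) * V' x) (at x)" .
      moreover have "((\<lambda>x. q * \<kappa> * x) has_real_derivative q * \<kappa>) (at x)"
        by (auto intro!: derivative_eq_intros)
      ultimately show ?thesis unfolding W_def by (rule DERIV_add)
    qed
    have negW: "q * V x powr (q - 1) * V' x + q * \<kappa> \<le> 0" if "0 < x" "x < T" for x
    proof -
      have Vx: "V x > 0" using pos that by auto
      have "V x \<le> V 0" using mono that by auto
      then have r: "V' x \<le> - \<kappa> * V x powr (1 - q)" using rate that by auto
      have c: "V x powr (q - 1) > 0" using Vx by simp
      have "q * V x powr (q - 1) * V' x \<le> q * V x powr (q - 1) * (- \<kappa> * V x powr (1 - q))"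
        using r c q by (intro mult_left_mono) auto
      also have "\<dots> = - q * \<kappa> * (V x powr (q - 1) * V x powr (1 - q))" by (simp add: algebra_simps)
      also have "V x powr (q - 1) * V x powr (1 - q) = 1"
        using Vx by (simp add: powr_add[symmetric])
      finally show ?thesis by simp
    qed
    have "W T \<le> W 0"
      by (rule decr_interval[OF T0 contW derW negW])
    then have "V T powr q + q * \<kappa> * T \<le> V 0 powr q" unfolding W_def by simp
    moreover have "q * \<kappa> * T = V 0 powr q" unfolding T_def using k q by simp
    ultimately have "V T powr q \<le> 0" by simp
    moreover have "V T powr q > 0" using VTp by simp
    ultimately show False by simp
  qed
  have "V t \<le> V T" using mono[OF T0] tT unfolding T_def by simp
  with VT nonneg[of t] T0 tT show "V t = 0" unfolding T_def by simp
qed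

definition gf :: "real \<Rightarrow> real \<Rightarrow> real \<Rightarrow> real \<Rightarrow> real" where
  "gf c1 c2 e s = c1 * s + c2 * (sgn s * \<bar>s\<bar> powr e)"

definition Gf :: "real \<Rightarrow> real \<Rightarrow> real \<Rightarrow> real \<Rightarrow> real" where
  "Gf c1 c2 e s = c1 * s^2 / 2 + c2 * \<bar>s\<bar> powr (1+e) / (1+e)"

lemma Gf_deriv:
  assumes "0 < e"
  shows "(Gf c1 c2 e has_real_derivative gf c1 c2 e s) (at s)"
proof -
  have d1: "((\<lambda>s. c1 * s^2 / 2) has_real_derivative c1 * s) (at s)"
    by (auto intro!: derivative_eq_intros)
  have d2: "((\<lambda>s. c2 * \<bar>s\<bar> powr (1+e) / (1+e)) has_real_derivative c2 * ((1+e) * (sgn s * \<bar>s\<bar> powr e)) / (1+e)) (at s)"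
    by (intro DERIV_cdivide DERIV_cmult abs_powr_deriv assms)
  have "c2 * ((1+e) * (sgn s * \<bar>s\<bar> powr e)) / (1+e) = c2 * (sgn s * \<bar>s\<bar> powr e)"
    using assms by simp
  with DERIV_add[OF d1 d2] show ?thesis
    unfolding Gf_def[abs_def] gf_def by simp
qed

lemma gf_abs:
  assumes "c1 \<ge> 0" "c2 \<ge> 0"
  shows "\<bar>gf c1 c2 e s\<bar> = c1 * \<bar>s\<bar> + c2 * \<bar>s\<bar> powr e"
proof -
  consider "s > 0" | "s = 0" | "s < 0" by linarith
  then show ?thesis
  proof cases
    case 1
    then have "gf c1 c2 e s = c1 * \<bar>s\<bar> + c2 * \<bar>s\<bar> powr e" by (simp add: gf_def)
    then show ?thesis using assms by simp
  next
    case 2 then show ?thesis by (simp add: gf_def)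
  next
    case 3
    then have "gf c1 c2 e s = - (c1 * \<bar>s\<bar> + c2 * \<bar>s\<bar> powr e)" by (simp add: gf_def)
    then have "\<bar>gf c1 c2 e s\<bar> = \<bar>c1 * \<bar>s\<bar> + c2 * \<bar>s\<bar> powr e\<bar>" by (metis abs_minus_cancel)
    moreover have "c1 * \<bar>s\<bar> + c2 * \<bar>s\<bar> powr e \<ge> 0" using assms by simp
    ultimately show ?thesis by simp
  qed
qed

lemma gf_ge1:
  assumes "c1 \<ge> 0" "c2 \<ge> 0"
  shows "\<bar>c1 * s\<bar> \<le> \<bar>gf c1 c2 e s\<bar>"
  using gf_abs[OF assms] assms by (simp add: abs_mult)

lemma gf_ge2:
  assumes "c1 \<ge> 0" "c2 \<ge> 0"
  shows "c2^2 * \<bar>s\<bar> powr (2*e) \<le> (gf c1 c2 e s)^2"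
proof -
  have "c2 * \<bar>s\<bar> powr e \<le> \<bar>gf c1 c2 e s\<bar>" using gf_abs[OF assms] assms by simp
  then have "(c2 * \<bar>s\<bar> powr e)^2 \<le> \<bar>gf c1 c2 e s\<bar>^2"
    using assms by (intro power_mono) auto
  moreover have "(c2 * \<bar>s\<bar> powr e)^2 = c2^2 * \<bar>s\<bar> powr (2*e)"
  proof -
    have "(\<bar>s\<bar> powr e)^2 = \<bar>s\<bar> powr e * \<bar>s\<bar> powr e" by (rule power2_eq_square)
    also have "\<dots> = \<bar>s\<bar> powr (e + e)" by (rule powr_add[symmetric])
    also have "e + e = 2 * e" by simp
    finally show ?thesis by (simp add: power_mult_distrib)
  qed
  ultimately show ?thesis by simp
qed

lemma Gf_ge:
  assumes "c2 \<ge> 0" "e > 0"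
  shows "c1 * s^2 / 2 \<le> Gf c1 c2 e s"
proof -
  have "c2 * \<bar>s\<bar> powr (1+e) / (1+e) \<ge> 0" using assms by simp
  then show ?thesis unfolding Gf_def by linarith
qed

lemma Gf_le:
  assumes "c1 \<ge> 0" "c2 \<ge> 0" "0 < e" "e < 1" "s^2 \<le> B"
  shows "Gf c1 c2 e s \<le> (c1 * sqrt B powr (1-e) / 2 + c2 / (1+e)) * \<bar>s\<bar> powr (1+e)"
proof -
  have sB: "\<bar>s\<bar> \<le> sqrt B" by (rule real_le_rsqrt) (use assms(5) in simp)
  have "s^2 = \<bar>s\<bar> powr (1+e) * \<bar>s\<bar> powr (1-e)"
  proof (cases "s = 0")
    case False
    then have "\<bar>s\<bar> powr (1+e) * \<bar>s\<bar> powr (1-e) = \<bar>s\<bar> powr 2" by (simp add: powr_add[symmetric])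
    also have "\<dots> = s^2" by (simp add: powr_realpow)
    finally show ?thesis by simp
  qed simp
  also have "\<dots> \<le> \<bar>s\<bar> powr (1+e) * sqrt B powr (1-e)"
  proof -
    have "\<bar>s\<bar> powr (1-e) \<le> sqrt B powr (1-e)" using sB assms by (intro powr_mono2) auto
    then show ?thesis by (rule mult_left_mono) simp
  qed
  finally have "c1 * s^2 \<le> c1 * (\<bar>s\<bar> powr (1+e) * sqrt B powr (1-e))"
    by (rule mult_left_mono) (use assms in simp)
  then have "c1 * s^2 / 2 \<le> c1 * (\<bar>s\<bar> powr (1+e) * sqrt B powr (1-e)) / 2"
    by (rule divide_right_mono) simp
  moreover have "(c1 * sqrt B powr (1-e) / 2 + c2 / (1+e)) * \<bar>s\<bar> powr (1+e)
      = c1 * (\<bar>s\<bar> powr (1+e) * sqrt B powr (1-e)) / 2 + c2 * \<bar>s\<bar> powr (1+e) / (1+e)"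
    using assms by (simp add: distrib_right)
  ultimately show ?thesis unfolding Gf_def by linarith
qed

lemma Gf_nonneg: "c1 \<ge> 0 \<Longrightarrow> c2 \<ge> 0 \<Longrightarrow> e > 0 \<Longrightarrow> Gf c1 c2 e s \<ge> 0"
  unfolding Gf_def by simp



lemma agg:
  fixes s w :: "'p::finite \<Rightarrow> real"
  assumes w: "\<And>p. dmin \<le> w p" "\<And>p. w p \<le> dmax" and dmin: "dmin > 0"
    and c: "c1 > 0" "c2 > 0" and e: "0 < e" "e < 1"
    and V: "(\<Sum>p\<in>UNIV. w p * Gf c1 c2 e (s p)) \<le> V0"
  shows "c2^2 / (dmax * (c1 * sqrt (2*V0/(c1*dmin)) powr (1-e)/2 + c2/(1+e)) * real CARD('p)) powr (2*e/(1+e))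
           * (\<Sum>p\<in>UNIV. w p * Gf c1 c2 e (s p)) powr (2*e/(1+e))
         \<le> (\<Sum>p\<in>UNIV. (gf c1 c2 e (s p))^2)"
proof -
  define B where "B = 2*V0/(c1*dmin)"
  define C where "C = c1 * sqrt B powr (1-e)/2 + c2/(1+e)"
  define V where "V = (\<Sum>p\<in>UNIV. w p * Gf c1 c2 e (s p))"
  define r where "r = 2*e/(1+e)"
  have wpos: "\<And>p. w p > 0" using w(1) dmin by (meson less_le_trans)
  have Gnn: "\<And>p. w p * Gf c1 c2 e (s p) \<ge> 0"
    using wpos Gf_nonneg c e by (simp add: less_imp_le)
  have sq: "(s p)^2 \<le> B" for p
  proof -
    have "w p * Gf c1 c2 e (s p) \<le> V" unfolding V_def
      by (rule member_le_sum) (auto simp: Gnn)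
    moreover have "dmin * (c1 * (s p)^2/2) \<le> w p * Gf c1 c2 e (s p)"
    proof (rule mult_mono)
      show "dmin \<le> w p" by (rule w(1))
      show "c1 * (s p)^2/2 \<le> Gf c1 c2 e (s p)" by (rule Gf_ge) (use c e in auto)
      show "0 \<le> w p" using wpos[of p] by simp
      show "0 \<le> c1 * (s p)^2/2" using c by simp
    qed
    ultimately have "dmin * (c1 * (s p)^2/2) \<le> V0" using V unfolding V_def by linarith
    then have "(s p)^2 * (c1*dmin) \<le> 2 * V0" by (simp add: algebra_simps)
    then show ?thesis unfolding B_def using c dmin by (simp add: pos_le_divide_eq)
  qed
  obtain p0 where p0: "\<And>p. \<bar>s p\<bar> \<le> \<bar>s p0\<bar>"
  proof -
    have fin: "finite (range (\<lambda>p. \<bar>s p\<bar>))" by simp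
    have ne: "range (\<lambda>p. \<bar>s p\<bar>) \<noteq> {}" by simp
    have "Max (range (\<lambda>p. \<bar>s p\<bar>)) \<in> range (\<lambda>p. \<bar>s p\<bar>)" by (rule Max_in[OF fin ne])
    then obtain p0 where "Max (range (\<lambda>p. \<bar>s p\<bar>)) = \<bar>s p0\<bar>" by blast
    moreover have "\<And>p. \<bar>s p\<bar> \<le> Max (range (\<lambda>p. \<bar>s p\<bar>))" using fin by simp
    ultimately show ?thesis using that by auto
  qed
  have dmax: "dmax > 0" using wpos[of p0] w(2)[of p0] by simp
  have C0: "C > 0" unfolding C_def using c e by (simp add: add_nonneg_pos)
  have le: "w p * Gf c1 c2 e (s p) \<le> dmax * (C * \<bar>s p0\<bar> powr (1+e))" for p
  proof -
    have "Gf c1 c2 e (s p) \<le> C * \<bar>s p\<bar> powr (1+e)"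
      unfolding C_def by (rule Gf_le) (use c e sq in auto)
    also have "\<dots> \<le> C * \<bar>s p0\<bar> powr (1+e)"
    proof -
      have "\<bar>s p\<bar> powr (1+e) \<le> \<bar>s p0\<bar> powr (1+e)"
        by (rule powr_mono2) (use p0[of p] e in auto)
      then show ?thesis by (rule mult_left_mono) (use C0 in simp)
    qed
    finally have "Gf c1 c2 e (s p) \<le> C * \<bar>s p0\<bar> powr (1+e)" .
    then show "w p * Gf c1 c2 e (s p) \<le> dmax * (C * \<bar>s p0\<bar> powr (1+e))"
    proof (rule mult_mono[rotated])
      show "w p \<le> dmax" by (rule w(2))
      show "0 \<le> dmax" using w(2)[of p] wpos[of p] by simp
      show "0 \<le> Gf c1 c2 e (s p)" by (rule Gf_nonneg) (use c e in auto)
    qed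
  qed
  have "V \<le> (\<Sum>p\<in>(UNIV::'p set). dmax * (C * \<bar>s p0\<bar> powr (1+e)))"
    unfolding V_def by (intro sum_mono le)
  also have "\<dots> = real CARD('p) * (dmax * (C * \<bar>s p0\<bar> powr (1+e)))" by simp
  also have "\<dots> = (dmax * C * real CARD('p)) * \<bar>s p0\<bar> powr (1+e)" by (simp only: mult_ac)
  finally have VK: "V \<le> (dmax * C * real CARD('p)) * \<bar>s p0\<bar> powr (1+e)" .
  have V0': "V \<ge> 0" unfolding V_def by (rule sum_nonneg) (simp add: Gnn)
  have r0: "r \<ge> 0" unfolding r_def using e by simp
  have K0: "dmax * C * real CARD('p) > 0" using dmax C0 by simp
  have "V powr r \<le> ((dmax * C * real CARD('p)) * \<bar>s p0\<bar> powr (1+e)) powr r"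
    by (rule powr_mono2[OF r0 V0' VK])
  also have "\<dots> = (dmax * C * real CARD('p)) powr r * \<bar>s p0\<bar> powr (2*e)"
    using K0 e by (simp add: powr_mult powr_powr r_def)
  finally have VKr: "V powr r \<le> (dmax * C * real CARD('p)) powr r * \<bar>s p0\<bar> powr (2*e)" .
  have Kr: "(dmax * C * real CARD('p)) powr r > 0" using K0 by (metis powr_gt_zero less_irrefl)
  have "c2^2 / (dmax * C * real CARD('p)) powr r * V powr r \<le> c2^2 * \<bar>s p0\<bar> powr (2*e)"
  proof -
    have "c2^2 * V powr r \<le> c2^2 * ((dmax * C * real CARD('p)) powr r * \<bar>s p0\<bar> powr (2*e))"
      using VKr by (rule mult_left_mono) simp
    then show ?thesis using Kr by (simp add: divide_le_eq algebra_simps)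
  qed
  also have "\<dots> \<le> (gf c1 c2 e (s p0))^2" using gf_ge2 c by (simp add: less_imp_le)
  also have "\<dots> \<le> (\<Sum>p\<in>UNIV. (gf c1 c2 e (s p))^2)"
    by (rule member_le_sum) auto
  finally show ?thesis unfolding C_def B_def V_def r_def .
qed



lemma diag_mult:
  fixes D :: "real^'f^'f"
  assumes "\<forall>i j. i \<noteq> j \<longrightarrow> D$i$j = 0"
  shows "(D *v z) $ i = D$i$i * z$i"
proof -
  have "(D *v z) $ i = (\<Sum>j\<in>UNIV. D$i$j * z$j)" by (simp add: matrix_vector_mult_def)
  also have "\<dots> = (\<Sum>j\<in>UNIV. if j = i then D$i$i * z$i else 0)"
    by (rule sum.cong) (use assms in auto)
  also have "\<dots> = D$i$i * z$i" by simp
  finally show ?thesis .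
qed

lemma Hmat_mult:
  fixes a :: "'f::finite \<Rightarrow> 'f \<Rightarrow> real"
  assumes "\<forall>i. a i i = 0"
  shows "(Hmat a b *v u) $ i = b i * u$i + (\<Sum>j\<in>UNIV. a i j * (u$i - u$j))"
proof -
  have "(Hmat a b *v u) $ i = (\<Sum>j\<in>UNIV. (if i = j then b i + (\<Sum>k\<in>UNIV. a i k) else - a i j) * u$j)"
    by (simp add: matrix_vector_mult_def Hmat_def)
  also have "\<dots> = (\<Sum>j\<in>UNIV. (if j = i then (b i + (\<Sum>k\<in>UNIV. a i k)) * u$i else 0) - a i j * u$j)"
    by (rule sum.cong) (use assms in auto)
  also have "\<dots> = (b i + (\<Sum>k\<in>UNIV. a i k)) * u$i - (\<Sum>j\<in>UNIV. a i j * u$j)"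
    by (simp add: sum_subtractf)
  also have "\<dots> = b i * u$i + (\<Sum>j\<in>UNIV. a i j * (u$i - u$j))"
    by (simp add: right_diff_distrib sum_subtractf sum_distrib_right distrib_right)
  finally show ?thesis .
qed

lemma lyap_scalar:
  fixes D H :: "real^'f^'f"
  assumes diag: "\<forall>i j. i \<noteq> j \<longrightarrow> D$i$j = 0"
    and L: "\<forall>x. x \<bullet> ((transpose H ** D + D ** H - 2 *\<^sub>R mat 1) *v x) \<ge> 0"
  shows "(\<Sum>i\<in>UNIV. (u$i)^2) \<le> (\<Sum>i\<in>UNIV. D$i$i * u$i * (H *v u)$i)"
proof -
  have "0 \<le> u \<bullet> ((transpose H ** D + D ** H - 2 *\<^sub>R mat 1) *v u)" using L by blast
  also have "\<dots> = u \<bullet> (transpose H *v (D *v u)) + u \<bullet> (D *v (H *v u)) - 2 * (u \<bullet> u)"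
    by (simp add: matrix_vector_mult_add_rdistrib matrix_vector_mult_diff_rdistrib
        matrix_vector_mul_assoc[symmetric] scaleR_matrix_vector_assoc[symmetric]
        inner_add_right inner_diff_right)
  also have "u \<bullet> (transpose H *v (D *v u)) = (H *v u) \<bullet> (D *v u)"
    by (metis dot_lmul_matrix vector_transpose_matrix)
  also have "(H *v u) \<bullet> (D *v u) = (\<Sum>i\<in>UNIV. D$i$i * u$i * (H *v u)$i)"
    by (simp add: inner_vec_def diag_mult[OF diag] mult_ac)
  also have "u \<bullet> (D *v (H *v u)) = (\<Sum>i\<in>UNIV. D$i$i * u$i * (H *v u)$i)"
    by (simp add: inner_vec_def diag_mult[OF diag] mult_ac)
  also have "u \<bullet> u = (\<Sum>i\<in>UNIV. (u$i)^2)"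
    by (simp add: inner_vec_def power2_eq_square)
  finally show ?thesis by simp
qed

lemma kron_mult:
  fixes D :: "real^'f^'f" and S :: "real^'n^'n"
  assumes diag: "\<forall>i j. i \<noteq> j \<longrightarrow> D$i$j = 0"
  shows "(kron D S *v X) $ p = D$(fst p)$(fst p) * (S *v (\<chi> l. X$(fst p, l))) $ (snd p)"
proof -
  obtain i k where p: "p = (i, k)" by (cases p)
  have "(kron D S *v X) $ p = (\<Sum>q\<in>UNIV. D$i$(fst q) * S$k$(snd q) * X$q)"
    by (simp add: matrix_vector_mult_def kron_def p)
  also have "\<dots> = (\<Sum>j\<in>UNIV. \<Sum>l\<in>UNIV. D$i$j * S$k$l * X$(j,l))"
    by (simp add: UNIV_Times_UNIV[symmetric] sum.cartesian_product split_beta del: UNIV_Times_UNIV)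
  also have "\<dots> = (\<Sum>j\<in>UNIV. if j = i then (\<Sum>l\<in>UNIV. D$i$i * S$k$l * X$(i,l)) else 0)"
    by (rule sum.cong) (use diag in auto)
  also have "\<dots> = D$i$i * (\<Sum>l\<in>UNIV. S$k$l * X$(i,l))"
    by (simp add: sum_distrib_left mult_ac)
  also have "\<dots> = D$(fst p)$(fst p) * (S *v (\<chi> l. X$(fst p, l))) $ (snd p)"
    by (simp add: p matrix_vector_mult_def)
  finally show ?thesis .
qed



definition gv :: "real \<Rightarrow> real \<Rightarrow> real \<Rightarrow> real^'n \<Rightarrow> real^'n" where
  "gv c1 c2 e v = (\<chi> k. gf c1 c2 e (v$k))"

lemma gv_eq: "c1 *\<^sub>R v + c2 *\<^sub>R sig e v = gv c1 c2 e v"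
  by (simp add: vec_eq_iff gv_def gf_def sig_def)

lemma vd_comp:
  assumes "(f has_vector_derivative f') F"
  shows "((\<lambda>t. f t $ k) has_real_derivative f' $ k) F"
  unfolding has_real_derivative_iff_has_vector_derivative
  by (rule bounded_linear.has_vector_derivative[OF bounded_linear_vec_nth assms])

lemma vd_scale:
  assumes "(f has_vector_derivative f') F"
  shows "((\<lambda>t. c *\<^sub>R f t) has_vector_derivative c *\<^sub>R f') F"
  by (rule bounded_linear.has_vector_derivative[OF bounded_linear_scaleR_right assms])

lemma y_deriv:
  fixes a :: "'f::finite \<Rightarrow> 'f \<Rightarrow> real" and S :: "real^'n^'n"
  assumes sol: "observer_solution a b S c1 c2 e eta0 eta" and t: "t \<ge> 0"
  shows "((\<lambda>t. yout a b (eta0 t) (\<lambda>j. eta j t) i) has_vector_derivative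
     (S *v yout a b (eta0 t) (\<lambda>j. eta j t) i
       - (b i *\<^sub>R gv c1 c2 e (yout a b (eta0 t) (\<lambda>j. eta j t) i)
          + (\<Sum>j\<in>UNIV. a i j *\<^sub>R (gv c1 c2 e (yout a b (eta0 t) (\<lambda>j. eta j t) i)
                                   - gv c1 c2 e (yout a b (eta0 t) (\<lambda>j. eta j t) j))))))
     (at t within {0..})"
proof -
  define y where "y j = yout a b (eta0 t) (\<lambda>j. eta j t) j" for j
  define E where "E j = S *v eta j t - gv c1 c2 e (y j)" for j
  have d0: "(eta0 has_vector_derivative S *v eta0 t) (at t within {0..})"
    using sol t unfolding observer_solution_def by blast
  have dj: "(eta j has_vector_derivative E j) (at t within {0..})" for j
  proof -
    have "(eta j has_vector_derivative (S *v eta j t - c1 *\<^sub>R y j - c2 *\<^sub>R sig e (y j))) (at t within {0..})"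
      using sol t unfolding observer_solution_def y_def by blast
    moreover have "S *v eta j t - c1 *\<^sub>R y j - c2 *\<^sub>R sig e (y j) = E j"
      unfolding E_def gv_eq[symmetric] by (simp add: diff_diff_eq)
    ultimately show ?thesis by simp
  qed
  have D: "((\<lambda>t. b i *\<^sub>R (eta i t - eta0 t) + (\<Sum>j\<in>UNIV. a i j *\<^sub>R (eta i t - eta j t))) has_vector_derivative
      (b i *\<^sub>R (E i - S *v eta0 t) + (\<Sum>j\<in>UNIV. a i j *\<^sub>R (E i - E j)))) (at t within {0..})"
    by (intro has_vector_derivative_add vd_scale has_vector_derivative_diff has_vector_derivative_sum d0 dj)
  have lin: "S *v (b i *\<^sub>R (eta i t - eta0 t) + (\<Sum>j\<in>UNIV. a i j *\<^sub>R (eta i t - eta j t)))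
      = b i *\<^sub>R (S *v eta i t - S *v eta0 t) + (\<Sum>j\<in>UNIV. a i j *\<^sub>R (S *v eta i t - S *v eta j t))"
    by (simp add: matrix_vector_right_distrib matrix_vector_mult_scaleR matrix_vector_mult_diff_distrib
        linear_sum[OF matrix_vector_mul_linear])
  have eq: "b i *\<^sub>R (E i - S *v eta0 t) + (\<Sum>j\<in>UNIV. a i j *\<^sub>R (E i - E j))
      = S *v y i - (b i *\<^sub>R gv c1 c2 e (y i) + (\<Sum>j\<in>UNIV. a i j *\<^sub>R (gv c1 c2 e (y i) - gv c1 c2 e (y j))))"
  proof -
    have "y i = b i *\<^sub>R (eta i t - eta0 t) + (\<Sum>j\<in>UNIV. a i j *\<^sub>R (eta i t - eta j t))"
      by (simp add: y_def yout_def)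
    then have Sy: "S *v y i = b i *\<^sub>R (S *v eta i t - S *v eta0 t) + (\<Sum>j\<in>UNIV. a i j *\<^sub>R (S *v eta i t - S *v eta j t))"
      using lin by simp
    show ?thesis unfolding Sy E_def
      by (simp add: algebra_simps sum_subtractf sum.distrib)
  qed
  show ?thesis using D unfolding eq[unfolded y_def] unfolding yout_def .
qed

lemma sum_UNIV_pair: "(\<Sum>p\<in>(UNIV::('a::finite \<times> 'b::finite) set). f p) = (\<Sum>i\<in>UNIV. \<Sum>k\<in>UNIV. f (i,k))"
  by (simp add: UNIV_Times_UNIV[symmetric] sum.cartesian_product del: UNIV_Times_UNIV)

lemma vdot_bound:
  fixes a :: "'f::finite \<Rightarrow> 'f \<Rightarrow> real" and S :: "real^'n^'n" and D :: "real^'f^'f" and y :: "'f \<Rightarrow> real^'n"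
  assumes a_diag: "\<forall>i. a i i = 0"
    and D_diag: "\<forall>i j. i \<noteq> j \<longrightarrow> D$i$j = 0"
    and D_lyap: "\<forall>x. x \<bullet> ((transpose (Hmat a b) ** D + D ** Hmat a b - 2 *\<^sub>R mat 1) *v x) \<ge> 0"
    and c1: "c1 > 0" and c2: "c2 \<ge> 0"
  shows "(\<Sum>p\<in>UNIV. D$(fst p)$(fst p) * (gf c1 c2 e (y (fst p) $ snd p) *
            (S *v y (fst p) - (b (fst p) *\<^sub>R gv c1 c2 e (y (fst p))
              + (\<Sum>j\<in>UNIV. a (fst p) j *\<^sub>R (gv c1 c2 e (y (fst p)) - gv c1 c2 e (y j))))) $ snd p))
     \<le> - (1 - onorm (\<lambda>x. kron D S *v x) / c1) * (\<Sum>p\<in>UNIV. (gf c1 c2 e (y (fst p) $ snd p))^2)"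
proof -
  define G where "G p = gf c1 c2 e (y (fst p) $ snd p)" for p
  define d where "d i = D$i$i" for i
  define Hg where "Hg i = b i *\<^sub>R gv c1 c2 e (y i) + (\<Sum>j\<in>UNIV. a i j *\<^sub>R (gv c1 c2 e (y i) - gv c1 c2 e (y j)))" for i
  define ON where "ON = onorm (\<lambda>x. kron D S *v x)"
  define Gv :: "real^('f \<times> 'n)" where "Gv = (\<chi> p. G p)"
  define X :: "real^('f \<times> 'n)" where "X = (\<chi> p. y (fst p) $ snd p)"
  define N where "N = (\<Sum>p\<in>UNIV. (G p)^2)"
  have split: "(\<Sum>p\<in>UNIV. d (fst p) * (G p * (S *v y (fst p) - Hg (fst p)) $ snd p))
      = (\<Sum>p\<in>UNIV. d (fst p) * (G p * (S *v y (fst p)) $ snd p)) - (\<Sum>p\<in>UNIV. d (fst p) * (G p * Hg (fst p) $ snd p))"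
    by (simp add: sum_subtractf[symmetric] algebra_simps)
  have A_eq: "(\<Sum>p\<in>UNIV. d (fst p) * (G p * (S *v y (fst p)) $ snd p)) = Gv \<bullet> (kron D S *v X)"
    by (simp add: inner_vec_def kron_mult[OF D_diag] Gv_def X_def d_def mult_ac)
  have bl: "bounded_linear (\<lambda>x. kron D S *v x)"
    by (simp add: linear_conv_bounded_linear[symmetric])
  have ON0: "ON \<ge> 0" unfolding ON_def by (rule onorm_pos_le[OF bl])
  have nX: "c1 * norm X \<le> norm Gv"
  proof -
    have "norm (c1 *\<^sub>R X) \<le> norm Gv"
    proof (rule norm_le_componentwise_cart)
      fix p
      show "norm ((c1 *\<^sub>R X) $ p) \<le> norm (Gv $ p)"
        using gf_ge1[of c1 c2 "y (fst p) $ snd p" e] c1 c2 by (simp add: X_def Gv_def G_def)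
    qed
    then show ?thesis using c1 by simp
  qed
  have NG: "norm Gv ^ 2 = N"
    unfolding power2_norm_eq_inner by (simp add: inner_vec_def Gv_def N_def power2_eq_square)
  have A_le: "Gv \<bullet> (kron D S *v X) \<le> ON / c1 * N"
  proof -
    have "Gv \<bullet> (kron D S *v X) \<le> norm Gv * norm (kron D S *v X)" by (rule norm_cauchy_schwarz)
    also have "\<dots> \<le> norm Gv * (ON * norm X)"
      unfolding ON_def by (rule mult_left_mono[OF onorm[OF bl]]) simp
    also have "\<dots> = ON / c1 * (norm Gv * (c1 * norm X))" using c1 by simp
    also have "\<dots> \<le> ON / c1 * (norm Gv * norm Gv)"
      using nX ON0 c1 by (intro mult_left_mono) auto
    finally show ?thesis using NG by (simp add: power2_eq_square)
  qed
  define u :: "'n \<Rightarrow> real^'f" where "u k = (\<chi> i. G (i,k))" for k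
  have Hgk: "Hg i $ k = (Hmat a b *v u k) $ i" for i k
    by (simp add: Hg_def Hmat_mult[of a, OF a_diag] u_def gv_def G_def)
  have B_ge: "N \<le> (\<Sum>p\<in>UNIV. d (fst p) * (G p * Hg (fst p) $ snd p))"
  proof -
    have "N = (\<Sum>k\<in>UNIV. \<Sum>i\<in>UNIV. (u k $ i)^2)"
      unfolding N_def sum_UNIV_pair by (subst sum.swap) (simp add: u_def)
    also have "\<dots> \<le> (\<Sum>k\<in>UNIV. \<Sum>i\<in>UNIV. D$i$i * u k $ i * (Hmat a b *v u k) $ i)"
      by (rule sum_mono) (rule lyap_scalar[OF D_diag D_lyap])
    also have "\<dots> = (\<Sum>p\<in>UNIV. d (fst p) * (G p * Hg (fst p) $ snd p))"
      unfolding sum_UNIV_pair by (subst sum.swap) (simp add: u_def Hgk d_def mult_ac)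
    finally show ?thesis .
  qed
  have "(\<Sum>p\<in>UNIV. d (fst p) * (G p * (S *v y (fst p) - Hg (fst p)) $ snd p)) \<le> ON / c1 * N - N"
    using split A_eq A_le B_ge by linarith
  also have "\<dots> = - (1 - ON / c1) * N" by (simp add: algebra_simps)
  finally show ?thesis unfolding G_def d_def Hg_def ON_def N_def .
qed

lemma zero_lemma:
  fixes a :: "'f::finite \<Rightarrow> 'f \<Rightarrow> real" and D :: "real^'f^'f" and x :: "'f \<Rightarrow> real^'n"
  assumes a_diag: "\<forall>i. a i i = 0"
    and D_diag: "\<forall>i j. i \<noteq> j \<longrightarrow> D$i$j = 0" and D_pos: "\<forall>i. D$i$i > 0"
    and D_lyap: "\<forall>x. x \<bullet> ((transpose (Hmat a b) ** D + D ** Hmat a b - 2 *\<^sub>R mat 1) *v x) \<ge> 0"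
    and c1: "c1 > 0" and c2: "c2 \<ge> 0" and e: "e > 0"
    and V0: "(\<Sum>p\<in>UNIV. D$(fst p)$(fst p) * Gf c1 c2 e (yout a b x0 x (fst p) $ snd p)) = 0"
  shows "x i - x0 = 0"
proof -
  have nn: "\<forall>p\<in>UNIV. 0 \<le> D$(fst p)$(fst p) * Gf c1 c2 e (yout a b x0 x (fst p) $ snd p)"
    using D_pos Gf_nonneg[of c1 c2 e] c1 c2 e by (simp add: less_imp_le)
  have yz: "yout a b x0 x j $ k = 0" for j k
  proof -
    have "D$j$j * Gf c1 c2 e (yout a b x0 x j $ k) = 0"
    proof -
      have all0: "\<forall>p\<in>UNIV. D$(fst p)$(fst p) * Gf c1 c2 e (yout a b x0 x (fst p) $ snd p) = 0"
        by (rule sum_nonneg_eq_0_iff[THEN iffD1, OF _ _ V0]) (use nn in auto)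
      then show ?thesis using bspec[OF all0, of "(j,k)"] by simp
    qed
    then have g0: "Gf c1 c2 e (yout a b x0 x j $ k) = 0" using D_pos[rule_format, of j] by simp
    have "c1 * (yout a b x0 x j $ k)^2 / 2 \<le> 0" using Gf_ge[OF c2 e, of c1 "yout a b x0 x j $ k"] g0 by simp
    then have "(yout a b x0 x j $ k)^2 \<le> 0" using c1 by (simp add: mult_le_0_iff divide_le_0_iff)
    then show ?thesis by simp
  qed
  have "(x i - x0) $ k = 0" for k
  proof -
    define u :: "real^'f" where "u = (\<chi> j. (x j - x0) $ k)"
    have Hu: "(Hmat a b *v u) $ j = 0" for j
    proof -
      have "(Hmat a b *v u) $ j = yout a b x0 x j $ k"
        by (simp add: Hmat_mult[of a, OF a_diag] u_def yout_def algebra_simps)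
      then show ?thesis using yz by simp
    qed
    have "(\<Sum>j\<in>UNIV. (u$j)^2) \<le> (\<Sum>j\<in>UNIV. D$j$j * u$j * (Hmat a b *v u)$j)"
      by (rule lyap_scalar[OF D_diag D_lyap])
    also have "\<dots> = 0" by (simp add: Hu)
    finally have "(\<Sum>j\<in>UNIV. (u$j)^2) \<le> 0" .
    then have "(\<Sum>j\<in>UNIV. (u$j)^2) = 0" by (meson order_antisym sum_nonneg zero_le_power2)
    then have "(u$i)^2 = 0" using sum_nonneg_eq_0_iff[of UNIV "\<lambda>j. (u$j)^2"] by simp
    then show ?thesis by (simp add: u_def)
  qed
  then show ?thesis by (simp add: vec_eq_iff)
qed

theorem mainTheorem2:
  fixes a :: "'f::finite \<Rightarrow> 'f \<Rightarrow> real" and b :: "'f \<Rightarrow> real"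
    and S :: "real^'n^'n" and D :: "real^'f^'f"
    and c1 c2 e :: real
  assumes a_nonneg: "\<forall>i j. a i j \<ge> 0" and a_diag: "\<forall>i. a i i = 0" and b_nonneg: "\<forall>i. b i \<ge> 0"
    and tree: "has_spanning_tree_from_leader a b"
    and e: "0 < e" "e < 1"
    and D_diag: "\<forall>i j. i \<noteq> j \<longrightarrow> D$i$j = 0" and D_pos: "\<forall>i. D$i$i > 0"
    and D_lyap: "\<forall>x. x \<bullet> ((transpose (Hmat a b) ** D + D ** Hmat a b - 2 *\<^sub>R mat 1) *v x) \<ge> 0"
    and c1: "c1 > onorm (\<lambda>x. kron D S *v x)"
    and c2: "c2 > 0"
  shows "\<exists>T1 :: real^'n \<Rightarrow> ('f \<Rightarrow> real^'n) \<Rightarrow> real.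
           (\<forall>x0 x. T1 x0 x \<ge> 0) \<and>
           (\<forall>eta0 eta. observer_solution a b S c1 c2 e eta0 eta \<longrightarrow>
              (\<forall>i. ((\<lambda>t. eta i t - eta0 t) \<longlongrightarrow> 0) (at (T1 (eta0 0) (\<lambda>j. eta j 0)) within {0..}) \<and>
                   (\<forall>t\<ge>T1 (eta0 0) (\<lambda>j. eta j 0). eta i t - eta0 t = 0)))"
proof -
  define d where "d i = D$i$i" for i
  define Vf :: "real^'n \<Rightarrow> ('f \<Rightarrow> real^'n) \<Rightarrow> real" where
    "Vf x0 x = (\<Sum>p\<in>UNIV. d (fst p) * Gf c1 c2 e (yout a b x0 x (fst p) $ snd p))" for x0 x
  define dmin where "dmin = Min (range d)"
  define dmax where "dmax = Max (range d)"
  define \<epsilon> where "\<epsilon> = 1 - onorm (\<lambda>x. kron D S *v x) / c1"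
  define r where "r = 2*e/(1+e)"
  define q where "q = 1 - r"
  define \<kappa> where "\<kappa> V0 = \<epsilon> * (c2^2 / (dmax * (c1 * sqrt (2*V0/(c1*dmin)) powr (1-e)/2 + c2/(1+e)) * real CARD('f \<times> 'n)) powr r)" for V0
  define T1 where "T1 x0 x = Vf x0 x powr q / (q * \<kappa> (Vf x0 x))" for x0 x
  have bl: "bounded_linear (\<lambda>x. kron D S *v x)"
    by (simp add: linear_conv_bounded_linear[symmetric])
  have ON0: "onorm (\<lambda>x. kron D S *v x) \<ge> 0" by (rule onorm_pos_le[OF bl])
  have c1p: "c1 > 0" using ON0 c1 by linarith
  have \<epsilon>p: "\<epsilon> > 0" unfolding \<epsilon>_def using c1 c1p by (simp add: divide_less_eq)
  have r: "0 < r" "r < 1" unfolding r_def using e by (auto simp: divide_less_eq)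
  have q: "0 < q" "q < 1" unfolding q_def using r by auto
  have dpos: "d i > 0" for i unfolding d_def using D_pos by simp
  have fin: "finite (range d)" by simp
  have dmin_le: "dmin \<le> d i" for i unfolding dmin_def using fin by simp
  have dmax_ge: "d i \<le> dmax" for i unfolding dmax_def using fin by simp
  have dminp: "dmin > 0"
  proof -
    have "dmin \<in> range d" unfolding dmin_def by (rule Min_in[OF fin]) simp
    then show ?thesis using dpos by auto
  qed
  have dmaxp: "dmax > 0" using dmin_le dmax_ge dminp by (meson less_le_trans)
  have Vf_nn: "Vf x0 x \<ge> 0" for x0 x
    unfolding Vf_def by (rule sum_nonneg) (use dpos Gf_nonneg c1p c2 e in \<open>simp add: less_imp_le\<close>)
  have \<kappa>p: "\<kappa> V0 > 0" for V0
  proof -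
    have C: "c1 * sqrt (2*V0/(c1*dmin)) powr (1-e)/2 + c2/(1+e) > 0"
      using c1p c2 e by (intro add_nonneg_pos) auto
    have "dmax * (c1 * sqrt (2*V0/(c1*dmin)) powr (1-e)/2 + c2/(1+e)) * real CARD('f \<times> 'n) > 0"
      using dmaxp C by simp
    then have "(dmax * (c1 * sqrt (2*V0/(c1*dmin)) powr (1-e)/2 + c2/(1+e)) * real CARD('f \<times> 'n)) powr r > 0"
      by (metis powr_gt_zero less_irrefl)
    then show ?thesis unfolding \<kappa>_def using \<epsilon>p c2 by simp
  qed
  have T1nn: "T1 x0 x \<ge> 0" for x0 x
    unfolding T1_def by (rule divide_nonneg_pos) (use \<kappa>p[of "Vf x0 x"] q in auto)
  have key: "((\<lambda>t. eta i t - eta0 t) \<longlongrightarrow> 0) (at (T1 (eta0 0) (\<lambda>j. eta j 0)) within {0..}) \<and>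
                   (\<forall>t\<ge>T1 (eta0 0) (\<lambda>j. eta j 0). eta i t - eta0 t = 0)"
    if sol: "observer_solution a b S c1 c2 e eta0 eta" for eta0 eta i
  proof -
    define y where "y j t = yout a b (eta0 t) (\<lambda>j. eta j t) j" for j t
    define Y' where "Y' j t = S *v y j t - (b j *\<^sub>R gv c1 c2 e (y j t)
              + (\<Sum>l\<in>UNIV. a j l *\<^sub>R (gv c1 c2 e (y j t) - gv c1 c2 e (y l t))))" for j t
    define V where "V t = Vf (eta0 t) (\<lambda>j. eta j t)" for t
    define V' where "V' t = (\<Sum>p\<in>UNIV. D$(fst p)$(fst p) * (gf c1 c2 e (y (fst p) t $ snd p) * Y' (fst p) t $ snd p))" for t
    define N where "N t = (\<Sum>p\<in>UNIV. (gf c1 c2 e (y (fst p) t $ snd p))^2)" for t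
    have Vy: "V t = (\<Sum>p\<in>UNIV. d (fst p) * Gf c1 c2 e (y (fst p) t $ snd p))" for t
      unfolding V_def Vf_def y_def ..
    have yd: "(y j has_vector_derivative Y' j t) (at t within {0..})" if "t \<ge> 0" for j t
      unfolding y_def[abs_def] Y'_def y_def by (rule y_deriv[OF sol that])
    have der: "(V has_real_derivative V' t) (at t within {0..})" if t: "t \<ge> 0" for t
    proof -
      have "((\<lambda>t. \<Sum>p\<in>UNIV. d (fst p) * Gf c1 c2 e (y (fst p) t $ snd p)) has_real_derivative V' t) (at t within {0..})"
        unfolding V'_def
      proof (rule DERIV_sum)
        fix p :: "'f \<times> 'n"
        have c: "((\<lambda>t. y (fst p) t $ snd p) has_real_derivative Y' (fst p) t $ snd p) (at t within {0..})"
          by (rule vd_comp[OF yd[OF t]])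
        have "((\<lambda>t. Gf c1 c2 e (y (fst p) t $ snd p)) has_real_derivative
               gf c1 c2 e (y (fst p) t $ snd p) * (Y' (fst p) t $ snd p)) (at t within {0..})"
          by (rule DERIV_chain'[OF c Gf_deriv[OF e(1)]])
        then show "((\<lambda>t. d (fst p) * Gf c1 c2 e (y (fst p) t $ snd p)) has_real_derivative
            D$(fst p)$(fst p) * (gf c1 c2 e (y (fst p) t $ snd p) * Y' (fst p) t $ snd p)) (at t within {0..})"
          unfolding d_def by (rule DERIV_cmult)
      qed
      moreover have Veq: "V = (\<lambda>t. \<Sum>p\<in>UNIV. d (fst p) * Gf c1 c2 e (y (fst p) t $ snd p))"
        by (rule ext) (rule Vy)
      ultimately show ?thesis by simp
    qed
    have Vbound: "V' t \<le> - \<epsilon> * N t" for t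
      unfolding V'_def N_def \<epsilon>_def Y'_def
      by (rule vdot_bound[OF a_diag D_diag D_lyap c1p less_imp_le[OF c2]])
    have Nnn: "N t \<ge> 0" for t unfolding N_def by (rule sum_nonneg) simp
    have neg: "V' t \<le> 0" for t
    proof -
      have "\<epsilon> * N t \<ge> 0" using Nnn[of t] \<epsilon>p by simp
      then show ?thesis using Vbound[of t] by linarith
    qed
    have Vnn: "V t \<ge> 0" for t unfolding V_def by (rule Vf_nn)
    have rate: "V' t \<le> - \<kappa> (V 0) * V t powr (1 - q)" if "t \<ge> 0" "V t \<le> V 0" for t
    proof -
      have ag: "c2^2 / (dmax * (c1 * sqrt (2*V 0/(c1*dmin)) powr (1-e)/2 + c2/(1+e)) * real CARD('f \<times> 'n)) powr (2*e/(1+e))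
           * (\<Sum>p\<in>UNIV. d (fst p) * Gf c1 c2 e (y (fst p) t $ snd p)) powr (2*e/(1+e))
         \<le> (\<Sum>p\<in>UNIV. (gf c1 c2 e (y (fst p) t $ snd p))^2)"
        by (rule agg[where w="\<lambda>p. d (fst p)" and s="\<lambda>p. y (fst p) t $ snd p"])
           (use dmin_le dmax_ge dminp c1p c2 e that Vy in auto)
      then have "c2^2 / (dmax * (c1 * sqrt (2*V 0/(c1*dmin)) powr (1-e)/2 + c2/(1+e)) * real CARD('f \<times> 'n)) powr r
           * V t powr r \<le> N t"
        unfolding N_def r_def Vy .
      then have "\<epsilon> * (c2^2 / (dmax * (c1 * sqrt (2*V 0/(c1*dmin)) powr (1-e)/2 + c2/(1+e)) * real CARD('f \<times> 'n)) powr r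
           * V t powr r) \<le> \<epsilon> * N t"
        using \<epsilon>p by (intro mult_left_mono) auto
      then have "\<kappa> (V 0) * V t powr r \<le> \<epsilon> * N t" unfolding \<kappa>_def by (simp add: mult_ac)
      moreover have "1 - q = r" unfolding q_def by simp
      ultimately show ?thesis using Vbound[of t] by simp
    qed
    have T1eq: "T1 (eta0 0) (\<lambda>j. eta j 0) = V 0 powr q / (q * \<kappa> (V 0))"
      unfolding T1_def V_def ..
    have zero: "V t = 0" if "t \<ge> T1 (eta0 0) (\<lambda>j. eta j 0)" for t
      by (rule finite_time[where V=V and V'=V', OF der Vnn neg rate \<kappa>p q]) (use that T1eq in auto)
    have ez: "eta i t - eta0 t = 0" if "t \<ge> T1 (eta0 0) (\<lambda>j. eta j 0)" for t
    proof -
      have "(\<Sum>p\<in>UNIV. D$(fst p)$(fst p) * Gf c1 c2 e (yout a b (eta0 t) (\<lambda>j. eta j t) (fst p) $ snd p)) = 0"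
        using zero[OF that] unfolding V_def Vf_def d_def .
      from zero_lemma[OF a_diag D_diag D_pos D_lyap c1p less_imp_le[OF c2] e(1) this]
      show ?thesis .
    qed
    define T where "T = T1 (eta0 0) (\<lambda>j. eta j 0)"
    have T0: "T \<ge> 0" unfolding T_def by (rule T1nn)
    have ci: "continuous (at T within {0..}) (eta i)"
      using sol T0 unfolding observer_solution_def by (meson has_vector_derivative_continuous)
    have c0: "continuous (at T within {0..}) eta0"
      using sol T0 unfolding observer_solution_def by (meson has_vector_derivative_continuous)
    have "continuous (at T within {0..}) (\<lambda>t. eta i t - eta0 t)"
      using ci c0 by (rule continuous_diff)
    then have "((\<lambda>t. eta i t - eta0 t) \<longlongrightarrow> eta i T - eta0 T) (at T within {0..})"
      by (simp add: continuous_within)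
    moreover have "eta i T - eta0 T = 0" using ez[of T] unfolding T_def by simp
    ultimately have "((\<lambda>t. eta i t - eta0 t) \<longlongrightarrow> 0) (at (T1 (eta0 0) (\<lambda>j. eta j 0)) within {0..})"
      unfolding T_def by simp
    then show ?thesis using ez by blast
  qed
  show ?thesis
    by (rule exI[of _ T1]) (use T1nn key in blast)
qed


end
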